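(* Let $\mathcal H_1,\mathcal H_2$ be real Hilbert spaces and let $\mathcal M_{ij}:\mathcal H_j\to\mathcal H_i$ ($i,j=1,2$) be bounded linear operators with $\mathcal M_{ji}=\mathcal M_{ij}^*$. Consider the self-adjoint bounded operator $\mathcal M=\begin{pmatrix}\mathcal M_{11}&\mathcal M_{12}\\ \mathcal M_{21}&\mathcal M_{22}\end{pmatrix}$ on $\mathcal H_1\times\mathcal H_2$ (with inner product $\langle (x_1,y_1),(x_2,y_2)\rangle=\langle x_1,x_2\rangle+\langle y_1,y_2\rangle$). Suppose $\mathcal M_{11}\ge 0$ and $-\mathcal M_{22}\ge0$, i.e. $\langle \mathcal M_{11}x,x\rangle\ge0$ for all $x\in\mathcal H_1$ and $\langle\mathcal M_{22}y,y\rangle\le 0$ for all $y\in\mathcal H_2$. Then for every $\varepsilon>0$ the operator $$\mathcal M_\varepsilon=\begin{pmatrix}\mathcal M_{11}+\varepsilon I&\mathcal M_{12}\\ \mathcal M_{21}&\mathcal M_{22}-\varepsilon I\end{pmatrix}$$ is invertible (with bounded inverse), and $$\|\mathcal M_\varepsilon^{-1}\mathcal M\|\le 1\qquad\text{for all }\varepsilon>0.$$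
   Context: $\mathcal M_{ij}^*$ denotes the Hilbert-space adjoint; $I$ denotes the identity operator on the relevant space; $\|\cdot\|$ is the operator norm. *)

theory Defs
  imports "HOL-Analysis.Analysis"
begin

definition block_op ::
  "('a::plus \<Rightarrow> 'a) \<Rightarrow> ('b \<Rightarrow> 'a) \<Rightarrow> ('a \<Rightarrow> 'b) \<Rightarrow> ('b::plus \<Rightarrow> 'b) \<Rightarrow> ('a \<times> 'b \<Rightarrow> 'a \<times> 'b)"
  where "block_op A B C D = (\<lambda>(x, y). (A x + B y, C x + D y))"

end

theory Submission
  imports Defs
begin

definition Jf :: "'a::real_vector \<times> 'b::real_vector \<Rightarrow> 'a \<times> 'b" where
  "Jf v = (fst v, - snd v)"

lemma Jf_Jf[simp]: "Jf (Jf v) = v" by (simp add: Jf_def)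
lemma Jf_diff: "Jf (a - b) = Jf a - Jf b" by (simp add: Jf_def)
lemma inner_Jf: "inner (Jf a) b = inner a (Jf (b::'a::real_inner \<times> 'b::real_inner))"
  by (cases a; cases b) (simp add: Jf_def)
lemma inner_Jf_Jf: "inner (Jf a) (Jf b) = inner a (b::'a::real_inner \<times> 'b::real_inner)"
  by (cases a; cases b) (simp add: Jf_def)
lemma norm_Jf[simp]: "norm (Jf (v::'a::real_inner \<times> 'b::real_inner)) = norm v"
  by (simp add: norm_eq_sqrt_inner inner_Jf_Jf)

lemma bl_block:
  assumes "bounded_linear A" "bounded_linear B" "bounded_linear C" "bounded_linear D"
  shows "bounded_linear (block_op A B C D)"
proof -
  have e: "block_op A B C D = (\<lambda>z. (A (fst z) + B (snd z), C (fst z) + D (snd z)))"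
    by (auto simp: block_op_def fun_eq_iff split: prod.split)
  show ?thesis unfolding e
    by (intro bounded_linear_Pair bounded_linear_add
        bounded_linear_compose[OF assms(1) bounded_linear_fst]
        bounded_linear_compose[OF assms(2) bounded_linear_snd]
        bounded_linear_compose[OF assms(3) bounded_linear_fst]
        bounded_linear_compose[OF assms(4) bounded_linear_snd])
qed

lemma sq_expand:
  fixes w v :: "'a::real_inner"
  shows "(norm (w - r *\<^sub>R v))^2 = (norm w)^2 - 2*r*inner v w + r^2*(norm v)^2"
proof -
  have "(norm (w - r *\<^sub>R v))^2 = inner (w - r *\<^sub>R v) (w - r *\<^sub>R v)"
    by (simp add: power2_norm_eq_inner)
  also have "\<dots> = inner w w - r * inner v w - r * inner w v + r*r*inner v v"
    by (simp add: inner_diff_left inner_diff_right algebra_simps)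
  also have "\<dots> = (norm w)^2 - 2*r*inner v w + r^2*(norm v)^2"
    by (simp only: power2_norm_eq_inner inner_commute[of w v]) (simp add: algebra_simps power2_eq_square)
  finally show ?thesis .
qed

theorem mainTheorem2:
  fixes M11 :: "'a::{real_inner, complete_space} \<Rightarrow> 'a"
    and M12 :: "'b::{real_inner, complete_space} \<Rightarrow> 'a"
    and M21 :: "'a \<Rightarrow> 'b"
    and M22 :: "'b \<Rightarrow> 'b"
  assumes bl11: "bounded_linear M11" and bl12: "bounded_linear M12"
    and bl21: "bounded_linear M21" and bl22: "bounded_linear M22"
    and adj11: "\<forall>x x'. inner (M11 x) x' = inner x (M11 x')"
    and adj22: "\<forall>y y'. inner (M22 y) y' = inner y (M22 y')"
    and adj21: "\<forall>x y. inner (M21 x) y = inner x (M12 y)"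
    and pos11: "\<forall>x. inner (M11 x) x \<ge> 0"
    and neg22: "\<forall>y. inner (M22 y) y \<le> 0"
  shows "\<forall>\<epsilon>>0. \<exists>N. bounded_linear N
      \<and> (\<forall>z. N (block_op (\<lambda>x. M11 x + \<epsilon> *\<^sub>R x) M12 M21 (\<lambda>y. M22 y - \<epsilon> *\<^sub>R y) z) = z)
      \<and> (\<forall>z. block_op (\<lambda>x. M11 x + \<epsilon> *\<^sub>R x) M12 M21 (\<lambda>y. M22 y - \<epsilon> *\<^sub>R y) (N z) = z)
      \<and> onorm (\<lambda>z. N (block_op M11 M12 M21 M22 z)) \<le> 1"
proof (intro allI impI)
  fix \<epsilon> :: real assume ep: "\<epsilon> > 0"
  define M where "M = block_op M11 M12 M21 M22"
  define Me where "Me = block_op (\<lambda>x. M11 x + \<epsilon> *\<^sub>R x) M12 M21 (\<lambda>y. M22 y - \<epsilon> *\<^sub>R y)"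
  have blM: "bounded_linear M" unfolding M_def using bl11 bl12 bl21 bl22 by (rule bl_block)
  have blMe: "bounded_linear Me" unfolding Me_def
    by (intro bl_block bl12 bl21 bounded_linear_add bounded_linear_sub bl11 bl22
        bounded_linear_scaleR_right bounded_linear_ident)
  interpret M: bounded_linear M by (rule blM)
  interpret Me: bounded_linear Me by (rule blMe)
  have Me_eq: "Me v = M v + \<epsilon> *\<^sub>R Jf v" for v
    by (cases v) (simp add: Me_def M_def block_op_def Jf_def algebra_simps)
  have acc: "inner (M v) (Jf v) \<ge> 0" for v
  proof (cases v)
    case (Pair x y)
    have "inner (M v) (Jf v) = inner (M11 x) x - inner (M22 y) y"
    proof -
      have m: "M12 (- y) = - M12 y" by (rule linear_neg[OF bounded_linear.linear[OF bl12]])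
      have c: "inner (M21 x) y = inner (M12 y) x" using adj21 by (simp add: inner_commute)
      show ?thesis
        by (simp add: Pair M_def block_op_def Jf_def inner_add_left m c)
    qed
    then show ?thesis using pos11 neg22 by (metis diff_ge_0_iff_ge order_trans)
  qed
  have coer: "inner (Me v) (Jf v) \<ge> \<epsilon> * (norm v)^2" for v
  proof -
    have "inner (Me v) (Jf v) = inner (M v) (Jf v) + \<epsilon> * (norm v)^2"
      by (simp add: Me_eq inner_add_left inner_Jf_Jf power2_norm_eq_inner)
    then show ?thesis using acc[of v] by simp
  qed
  have lowb: "\<epsilon> * norm v \<le> norm (Me v)" for v
  proof (cases "v = 0")
    case False
    have "\<epsilon> * (norm v)^2 \<le> norm (Me v) * norm v"
      using coer[of v] Cauchy_Schwarz_ineq2[of "Me v" "Jf v"] by simp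
    then show ?thesis using False by (simp add: power2_eq_square)
  qed simp
  have inj: "inj Me"
  proof (rule injI)
    fix a b assume "Me a = Me b"
    then have "Me (a - b) = 0" by (simp add: Me.diff)
    then have "\<epsilon> * norm (a - b) \<le> 0" using lowb[of "a-b"] by simp
    then show "a = b" using ep by (simp add: mult_le_0_iff)
  qed
  obtain K0 where K0: "\<And>v. norm (Me v) \<le> norm v * K0" using Me.bounded by blast
  define K where "K = max K0 \<epsilon>"
  have Kp: "K > 0" "K \<ge> \<epsilon>" using ep by (auto simp: K_def)
  have Kb: "norm (Me v) \<le> norm v * K" for v
  proof -
    have "K0 \<le> K" by (simp add: K_def)
    then have "norm v * K0 \<le> norm v * K" by (rule mult_left_mono) simp
    then show ?thesis using K0[of v] by linarith
  qed
  define \<rho> where "\<rho> = \<epsilon> / K^2"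
  define q where "q = sqrt (1 - \<epsilon>^2 / K^2)"
  have qq: "q^2 = 1 - \<epsilon>^2 / K^2" "0 \<le> q" "q < 1"
  proof -
    have "\<epsilon>^2 \<le> K^2" using Kp ep by (simp add: power_mono)
    then have a: "\<epsilon>^2 / K^2 \<le> 1" using Kp by (auto simp: divide_le_eq_1)
    have b: "\<epsilon>^2 / K^2 > 0" using Kp ep by simp
    show "q^2 = 1 - \<epsilon>^2 / K^2" using a by (simp add: q_def)
    show "0 \<le> q" using a by (simp add: q_def)
    show "q < 1" using a b by (simp add: q_def)
  qed
  have contr: "norm (w - \<rho> *\<^sub>R Jf (Me w)) \<le> q * norm w" for w
  proof -
    have "(norm (w - \<rho> *\<^sub>R Jf (Me w)))^2
        = (norm w)^2 - 2*\<rho>*inner (Me w) (Jf w) + \<rho>^2 * (norm (Me w))^2"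
      by (simp only: sq_expand inner_Jf norm_Jf)
    also have "\<dots> \<le> (norm w)^2 - 2*\<rho>*(\<epsilon> * (norm w)^2) + \<rho>^2 * (norm w * K)^2"
    proof -
      have r0: "\<rho> \<ge> 0" using ep Kp by (simp add: \<rho>_def)
      have "(norm (Me w))^2 \<le> (norm w * K)^2" using Kb[of w] by (simp add: power_mono)
      then have a: "\<rho>^2 * (norm (Me w))^2 \<le> \<rho>^2 * (norm w * K)^2"
        by (rule mult_left_mono) simp
      have b: "\<rho> * (\<epsilon> * (norm w)^2) \<le> \<rho> * inner (Me w) (Jf w)"
        using coer[of w] r0 by (rule mult_left_mono)
      show ?thesis using a b by linarith
    qed
    also have "\<dots> = q^2 * (norm w)^2"
    proof -
      have k: "K^2 \<noteq> 0" using Kp by simp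
      have e1: "\<rho>^2 * (norm w * K)^2 = (\<epsilon>^2/K^2) * (norm w)^2"
        using k by (simp add: \<rho>_def power_mult_distrib power_divide field_simps power2_eq_square)
      have e2: "2*\<rho>*(\<epsilon> * (norm w)^2) = 2*(\<epsilon>^2/K^2) * (norm w)^2"
        by (simp add: \<rho>_def power2_eq_square)
      show ?thesis unfolding e1 e2 qq(1) by (simp add: algebra_simps)
    qed
    also have "\<dots> = (q * norm w)^2" by (simp add: power_mult_distrib)
    finally have sq: "(norm (w - \<rho> *\<^sub>R Jf (Me w)))^2 \<le> (q * norm w)^2" .
    have "0 \<le> q * norm w" using qq(2) by simp
    with sq show ?thesis by (rule power2_le_imp_le)
  qed
  have surj: "surj Me"
  proof -
    { fix f
      define T where "T u = u - \<rho> *\<^sub>R (Jf (Me u) - Jf f)" for u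
      have "\<forall>x y. dist (T x) (T y) \<le> q * dist x y"
      proof (intro allI)
        fix x y
        have "T x - T y = (x - y) - \<rho> *\<^sub>R Jf (Me (x - y))"
          by (simp add: T_def Me.diff Jf_diff algebra_simps)
        then show "dist (T x) (T y) \<le> q * dist x y"
          using contr[of "x - y"] by (simp add: dist_norm)
      qed
      then obtain u where "T u = u" using banach_fix_type[OF qq(2) qq(3)] by blast
      then have "\<rho> *\<^sub>R (Jf (Me u) - Jf f) = 0" by (simp add: T_def)
      moreover have "\<rho> \<noteq> 0" using ep Kp by (simp add: \<rho>_def)
      ultimately have "Jf (Me u) = Jf f" by simp
      then have "Me u = f" by (metis Jf_Jf)
      then have "f \<in> range Me" by blast }
    then show ?thesis by blast
  qed
  define N where "N = inv Me"
  have NMe: "N (Me z) = z" for z by (simp add: N_def inj)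
  have MeN: "Me (N z) = z" for z by (simp add: N_def surj surj_f_inv_f)
  have blN: "bounded_linear N"
  proof (rule bounded_linear_intro[where K = "1/\<epsilon>"])
    fix x y show "N (x + y) = N x + N y"
      by (metis Me.add MeN NMe)
  next
    fix r x show "N (r *\<^sub>R x) = r *\<^sub>R N x"
      by (metis Me.scale MeN NMe)
  next
    fix x show "norm (N x) \<le> norm x * (1/\<epsilon>)"
      using lowb[of "N x"] ep by (simp add: MeN field_simps)
  qed
  have nb: "norm (N (M z)) \<le> 1 * norm z" for z
  proof -
    define w where "w = N (M z)"
    have "Me w = M z" by (simp add: w_def MeN)
    then have "M w + \<epsilon> *\<^sub>R Jf w = M z" by (simp add: Me_eq)
    then have "M z - M w = \<epsilon> *\<^sub>R Jf w" by (metis add_diff_cancel_left')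
    then have "M (z - w) = \<epsilon> *\<^sub>R Jf w" by (simp add: M.diff)
    then have "0 \<le> inner (\<epsilon> *\<^sub>R Jf w) (Jf (z - w))" using acc[of "z - w"] by simp
    then have "0 \<le> \<epsilon> * inner w (z - w)" by (simp add: inner_Jf_Jf)
    then have "0 \<le> inner w (z - w)" using ep by (simp add: zero_le_mult_iff)
    then have "(norm w)^2 \<le> inner w z" by (simp add: inner_diff_right power2_norm_eq_inner)
    also have "\<dots> \<le> norm w * norm z" by (rule norm_cauchy_schwarz)
    finally have "norm w * norm w \<le> norm w * norm z" by (simp add: power2_eq_square)
    then have "norm w \<le> norm z"
      by (metis mult_le_cancel_left norm_ge_zero not_le order_trans mult_zero_left)
    then show ?thesis by (simp add: w_def)
  qed
  have "onorm (\<lambda>z. N (M z)) \<le> 1" by (rule onorm_bound[OF _ nb]) simp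
  then show "\<exists>N. bounded_linear N \<and> (\<forall>z. N (Me z) = z) \<and> (\<forall>z. Me (N z) = z)
      \<and> onorm (\<lambda>z. N (M z)) \<le> 1"
    using blN NMe MeN by blast
qed

end
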